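(* Let $A$ be a deterministic adaptive algorithm that reconstructs any binary string $S$ by asking $\chi(S)$ substring queries to the oracle, for some computable function $\chi$. Then there exists a compressor $\mathcal C$ (with associated decompressor $\mathcal C^{-1}$) such that $|\mathcal C(S)|=\chi(S)$ for every such $S$.
   Context: A compressor is an injective computable function $\mathcal C:\{0,1\}^+\to\{0,1\}^+$ whose inverse $\mathcal C^{-1}$ (the decompressor, with $\mathcal C^{-1}(\mathcal C(S))=S$) is also computable; $|\mathcal C(S)|$ denotes the length in bits of $\mathcal C(S)$. A substring oracle knows a hidden string $S$ and answers queries of the form "Is $s$ a substring of $S$?" with yes/no. An adaptive algorithm may choose each query depending on the answers to previous queries; it reconstructs $S$ if after its queries it determines $S$ exactly. Strings are over the binary alphabet $\{0,1\}$. *)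

theory Defs
  imports Main "HOL-Library.Sublist"
begin

datatype recf = Zero | Succ | Proj nat | Comp recf "recf list" | Prim recf recf | Mini recf

text \<open>Big-step semantics: eval f xs y means the partial recursive function f
  applied to the argument vector xs halts with value y.\<close>
inductive eval :: "recf \<Rightarrow> nat list \<Rightarrow> nat \<Rightarrow> bool" where
  zero: "eval Zero xs 0"
| succ: "eval Succ (x # xs) (Suc x)"
| proj: "i < length xs \<Longrightarrow> eval (Proj i) xs (xs ! i)"
| comp: "length ys = length gs \<Longrightarrow> (\<forall>i < length gs. eval (gs ! i) xs (ys ! i))
          \<Longrightarrow> eval f ys z \<Longrightarrow> eval (Comp f gs) xs z"
| prim0: "eval f xs y \<Longrightarrow> eval (Prim f g) (0 # xs) y"
| primS: "eval (Prim f g) (n # xs) y \<Longrightarrow> eval g (n # y # xs) z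
          \<Longrightarrow> eval (Prim f g) (Suc n # xs) z"
| mini: "eval f (n # xs) 0 \<Longrightarrow> (\<forall>m < n. \<exists>y. eval f (m # xs) y \<and> 0 < y)
          \<Longrightarrow> eval (Mini f) xs n"

section \<open>Encoding binary strings as natural numbers (bijective base 2)\<close>

fun enc :: "bool list \<Rightarrow> nat" where
  "enc [] = 0"
| "enc (b # bs) = 2 * enc bs + (if b then 2 else 1)"

definition computable_on :: "bool list set \<Rightarrow> (bool list \<Rightarrow> bool list) \<Rightarrow> bool" where
  "computable_on D f \<longleftrightarrow> (\<exists>p. \<forall>s \<in> D. eval p [enc s] (enc (f s)))"

definition computable_nat_on :: "bool list set \<Rightarrow> (bool list \<Rightarrow> nat) \<Rightarrow> bool" where
  "computable_nat_on D f \<longleftrightarrow> (\<exists>p. \<forall>s \<in> D. eval p [enc s] (f s))"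

datatype action = Query "bool list" | Output "bool list"

fun enc_action :: "action \<Rightarrow> nat" where
  "enc_action (Query s) = 2 * enc s"
| "enc_action (Output s) = 2 * enc s + 1"

text \<open>A deterministic adaptive algorithm is a (partial) strategy: given the list of
  substring_answer answers received so far, it either asks the next query or outputs its answer.\<close>
type_synonym algorithm = "bool list \<Rightarrow> action option"

definition is_algorithm :: "algorithm \<Rightarrow> bool" where
  "is_algorithm A \<longleftrightarrow> (\<exists>p. \<forall>h y. eval p [enc h] y \<longleftrightarrow> (\<exists>a. A h = Some a \<and> y = enc_action a))"

definition substring_answer :: "bool list \<Rightarrow> bool list \<Rightarrow> bool" where
  "substring_answer S q \<longleftrightarrow> sublist q S"

definition reconstructs_with :: "algorithm \<Rightarrow> bool list \<Rightarrow> nat \<Rightarrow> bool" where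
  "reconstructs_with A S n \<longleftrightarrow>
     (\<exists>h. length h = n
        \<and> (\<forall>i < n. \<exists>q. A (take i h) = Some (Query q) \<and> h ! i = substring_answer S q)
        \<and> A h = Some (Output S))"

definition nonempty_strings :: "bool list set" where
  "nonempty_strings = {s. s \<noteq> []}"

definition compressor_pair :: "(bool list \<Rightarrow> bool list) \<Rightarrow> (bool list \<Rightarrow> bool list) \<Rightarrow> bool" where
  "compressor_pair C D \<longleftrightarrow>
     (\<forall>S \<in> nonempty_strings. C S \<in> nonempty_strings)
   \<and> inj_on C nonempty_strings
   \<and> computable_on nonempty_strings C
   \<and> (\<forall>S \<in> nonempty_strings. D (C S) = S)
   \<and> computable_on (C ` nonempty_strings) D"

end

theory Submission
  imports Defs
begin


definition pr :: "nat \<Rightarrow> (nat list \<Rightarrow> nat) \<Rightarrow> bool" where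
  "pr n f \<longleftrightarrow> (\<exists>p. \<forall>xs. length xs = n \<longrightarrow> eval p xs (f xs))"

lemma pr_cong: "pr n f \<Longrightarrow> (\<And>xs. length xs = n \<Longrightarrow> f xs = g xs) \<Longrightarrow> pr n g"
  unfolding pr_def by metis

lemma pr_zero: "pr n (\<lambda>_. 0)"
  unfolding pr_def by (rule exI[of _ Zero]) (simp add: eval.zero)

lemma pr_proj: "i < n \<Longrightarrow> pr n (\<lambda>xs. xs ! i)"
  unfolding pr_def by (rule exI[of _ "Proj i"]) (simp add: eval.proj)

lemma pr_succ: assumes "pr n f" shows "pr n (\<lambda>xs. Suc (f xs))"
proof -
  obtain p where p: "\<forall>xs. length xs = n \<longrightarrow> eval p xs (f xs)" using assms pr_def by blast
  have "eval (Comp Succ [p]) xs (Suc (f xs))" if "length xs = n" for xs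
    by (rule eval.comp[where ys="[f xs]"]) (use p that eval.succ in auto)
  then show ?thesis unfolding pr_def by blast
qed

lemma pr_const: "pr n (\<lambda>_. k)"
proof (induction k)
  case 0 show ?case by (rule pr_zero)
next
  case (Suc k) show ?case using pr_succ[OF Suc] .
qed

lemma progs_exist:
  assumes "\<forall>g\<in>set gs. pr n g"
  shows "\<exists>ps. length ps = length gs \<and> (\<forall>i<length gs. \<forall>xs. length xs = n \<longrightarrow> eval (ps!i) xs ((gs!i) xs))"
  using assms
proof (induction gs)
  case Nil then show ?case by simp
next
  case (Cons g gs)
  then obtain ps where ps: "length ps = length gs" "\<forall>i<length gs. \<forall>xs. length xs = n \<longrightarrow> eval (ps!i) xs ((gs!i) xs)" by auto
  obtain p where p: "\<forall>xs. length xs = n \<longrightarrow> eval p xs (g xs)" using Cons.prems pr_def by auto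
  show ?case
    apply (rule exI[of _ "p # ps"])
    using ps p by (auto simp: nth_Cons split: nat.splits)
qed

lemma pr_comp:
  assumes "pr (length gs) f" "\<forall>g\<in>set gs. pr n g"
  shows "pr n (\<lambda>xs. f (map (\<lambda>g. g xs) gs))"
proof -
  obtain p where p: "\<forall>xs. length xs = length gs \<longrightarrow> eval p xs (f xs)" using assms pr_def by blast
  obtain ps where ps: "length ps = length gs" "\<forall>i<length gs. \<forall>xs. length xs = n \<longrightarrow> eval (ps!i) xs ((gs!i) xs)"
    using progs_exist[OF assms(2)] by blast
  have "eval (Comp p ps) xs (f (map (\<lambda>g. g xs) gs))" if "length xs = n" for xs
    by (rule eval.comp[where ys="map (\<lambda>g. g xs) gs"]) (use p ps that in auto)
  then show ?thesis unfolding pr_def by blast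
qed

lemma pr_prim:
  assumes "pr n f" "pr (Suc (Suc n)) g"
  shows "pr (Suc n) (\<lambda>xs. rec_nat (f (tl xs)) (\<lambda>k y. g (k # y # tl xs)) (hd xs))"
proof -
  obtain p where p: "\<forall>xs. length xs = n \<longrightarrow> eval p xs (f xs)" using assms pr_def by blast
  obtain q where q: "\<forall>xs. length xs = Suc (Suc n) \<longrightarrow> eval q xs (g xs)" using assms pr_def by blast
  have "eval (Prim p q) (k # xs) (rec_nat (f xs) (\<lambda>k y. g (k # y # xs)) k)" if "length xs = n" for k xs
  proof (induction k)
    case 0 then show ?case using p that eval.prim0 by auto
  next
    case (Suc k) then show ?case using q that eval.primS by auto
  qed
  then have "eval (Prim p q) xs (rec_nat (f (tl xs)) (\<lambda>k y. g (k # y # tl xs)) (hd xs))" if "length xs = Suc n" for xs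
    using that by (cases xs) auto
  then show ?thesis unfolding pr_def by blast
qed

lemma map_nth_upt: "map (\<lambda>i. xs ! i) [0..<length xs] = xs"
  by (simp add: map_nth)

lemma pr_iter:
  assumes "pr n b" "pr (Suc (Suc n)) g" "pr n c"
  shows "pr n (\<lambda>xs. rec_nat (b xs) (\<lambda>k y. g (k # y # xs)) (c xs))"
proof -
  have P: "pr (Suc n) (\<lambda>xs. rec_nat (b (tl xs)) (\<lambda>k y. g (k # y # tl xs)) (hd xs))"
    by (rule pr_prim[OF assms(1,2)])
  let ?gs = "c # map (\<lambda>i xs. xs ! i) [0..<n]"
  have "pr n (\<lambda>xs. (\<lambda>xs. rec_nat (b (tl xs)) (\<lambda>k y. g (k # y # tl xs)) (hd xs)) (map (\<lambda>g. g xs) ?gs))"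
    by (rule pr_comp) (use P assms(3) pr_proj in auto)
  then show ?thesis
  proof (rule pr_cong)
    fix xs :: "nat list" assume "length xs = n"
    then have "map (\<lambda>g. g xs) (map (\<lambda>i xs. xs ! i) [0..<n]) = xs"
      using map_nth[of xs] by (simp add: o_def)
    then show "(\<lambda>xs. rec_nat (b (tl xs)) (\<lambda>k y. g (k # y # tl xs)) (hd xs)) (map (\<lambda>g. g xs) ?gs) = rec_nat (b xs) (\<lambda>k y. g (k # y # xs)) (c xs)"
      by simp
  qed
qed

lemma pr_comp1: "pr 1 f \<Longrightarrow> pr n g \<Longrightarrow> pr n (\<lambda>xs. f [g xs])"
  using pr_comp[where f=f and gs="[g]" and n=n] by simp
lemma pr_comp2: "pr 2 f \<Longrightarrow> pr n g \<Longrightarrow> pr n h \<Longrightarrow> pr n (\<lambda>xs. f [g xs, h xs])"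
  using pr_comp[where f=f and gs="[g,h]" and n=n] by (simp add: numeral_2_eq_2)
lemma pr_comp3: "pr 3 f \<Longrightarrow> pr n g \<Longrightarrow> pr n h \<Longrightarrow> pr n k \<Longrightarrow> pr n (\<lambda>xs. f [g xs, h xs, k xs])"
  using pr_comp[where f=f and gs="[g,h,k]" and n=n] by (simp add: numeral_3_eq_3)



lemma rec_suc: "rec_nat a (\<lambda>k y. Suc y) m = a + m" by (induction m) auto

lemma pr_add: assumes "pr n f" "pr n g" shows "pr n (\<lambda>xs. f xs + g xs)"
proof -
  have "pr 2 (\<lambda>xs. rec_nat (xs!0) (\<lambda>k y. (\<lambda>zs. Suc (zs!1)) (k#y#xs)) (xs!1))"
    by (rule pr_iter[where b="\<lambda>xs. xs!0" and c="\<lambda>xs. xs!1" and g="\<lambda>zs. Suc (zs!1)"])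
       (rule pr_proj; simp | rule pr_succ, rule pr_proj; simp)+
  then have "pr 2 (\<lambda>ys. ys!0 + ys!1)" by (rule pr_cong) (simp add: rec_suc)
  from pr_comp2[OF this assms] show ?thesis by simp
qed

lemma rec_mult: "rec_nat 0 (\<lambda>k y. y + a) m = a * m" by (induction m) auto

lemma pr_mult: assumes "pr n f" "pr n g" shows "pr n (\<lambda>xs. f xs * g xs)"
proof -
  have "pr 2 (\<lambda>xs. rec_nat 0 (\<lambda>k y. (\<lambda>zs. zs!1 + zs!2) (k#y#xs)) (xs!1))"
    by (rule pr_iter[where b="\<lambda>xs. 0" and c="\<lambda>xs. xs!1" and g="\<lambda>zs. zs!1 + zs!2"])
       (rule pr_const | rule pr_proj; simp | rule pr_add; rule pr_proj; simp)+
  then have "pr 2 (\<lambda>ys. ys!0 * ys!1)" by (rule pr_cong) (simp add: rec_mult)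
  from pr_comp2[OF this assms] show ?thesis by simp
qed

lemma rec_pred: "rec_nat 0 (\<lambda>k y. k) m = m - 1" by (induction m) auto

lemma pr_pred: assumes "pr n f" shows "pr n (\<lambda>xs. f xs - 1)"
proof -
  have "pr 1 (\<lambda>xs. rec_nat 0 (\<lambda>k y. (\<lambda>zs. zs!0) (k#y#xs)) (xs!0))"
    by (rule pr_iter[where b="\<lambda>xs. 0" and c="\<lambda>xs. xs!0" and g="\<lambda>zs. zs!0"])
       (rule pr_const | rule pr_proj; simp)+
  then have "pr 1 (\<lambda>ys. ys!0 - 1)" by (rule pr_cong) (simp add: rec_pred)
  from pr_comp1[OF this assms] show ?thesis by simp
qed

lemma rec_sub: "rec_nat a (\<lambda>k y. y - Suc 0) m = a - m" by (induction m) auto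

lemma pr_sub: assumes "pr n f" "pr n g" shows "pr n (\<lambda>xs. f xs - g xs)"
proof -
  have "pr 2 (\<lambda>xs. rec_nat (xs!0) (\<lambda>k y. (\<lambda>zs. zs!1 - 1) (k#y#xs)) (xs!1))"
    by (rule pr_iter[where b="\<lambda>xs. xs!0" and c="\<lambda>xs. xs!1" and g="\<lambda>zs. zs!1 - 1"])
       (rule pr_proj; simp | rule pr_pred, rule pr_proj; simp)+
  then have "pr 2 (\<lambda>ys. ys!0 - ys!1)" by (rule pr_cong) (simp add: rec_sub)
  from pr_comp2[OF this assms] show ?thesis by simp
qed

lemma rec_if: "rec_nat b (\<lambda>k y. a) m = (if m = 0 then b else a)" by (cases m) auto

lemma pr_if: assumes "pr n c" "pr n a" "pr n b" shows "pr n (\<lambda>xs. if c xs = 0 then b xs else a xs)"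
proof -
  have "pr 3 (\<lambda>xs. rec_nat (xs!2) (\<lambda>k y. (\<lambda>zs. zs!3) (k#y#xs)) (xs!0))"
    by (rule pr_iter[where b="\<lambda>xs. xs!2" and c="\<lambda>xs. xs!0" and g="\<lambda>zs. zs!3"])
       (rule pr_proj; simp)+
  then have "pr 3 (\<lambda>ys. if ys!0 = 0 then ys!2 else ys!1)" by (rule pr_cong) (simp add: rec_if)
  from pr_comp3[OF this assms] show ?thesis by (rule pr_cong) (simp add: numeral_2_eq_2)
qed

definition prP :: "nat \<Rightarrow> (nat list \<Rightarrow> bool) \<Rightarrow> bool" where
  "prP n P \<longleftrightarrow> pr n (\<lambda>xs. if P xs then 1 else 0)"

lemma prP_cong: "prP n P \<Longrightarrow> (\<And>xs. length xs = n \<Longrightarrow> P xs = Q xs) \<Longrightarrow> prP n Q"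
  unfolding prP_def by (erule pr_cong) simp

lemma pr_ifP: assumes "prP n P" "pr n a" "pr n b" shows "pr n (\<lambda>xs. if P xs then a xs else b xs)"
proof -
  have "pr n (\<lambda>xs. if (if P xs then 1 else 0) = (0::nat) then b xs else a xs)"
    using pr_if[OF assms[unfolded prP_def]] .
  then show ?thesis by (rule pr_cong) simp
qed

lemma prP_zero: assumes "pr n f" shows "prP n (\<lambda>xs. f xs = 0)"
proof -
  have "pr n (\<lambda>xs. if f xs = 0 then (\<lambda>_. 1) xs else (\<lambda>_. 0) xs)"
    by (rule pr_if[OF assms pr_const pr_const])
  then show ?thesis unfolding prP_def by simp
qed

lemma prP_not: assumes "prP n P" shows "prP n (\<lambda>xs. \<not> P xs)"
proof -
  have "pr n (\<lambda>xs. if P xs then (\<lambda>_. 0) xs else (\<lambda>_. 1) xs)"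
    by (rule pr_ifP[OF assms pr_const pr_const])
  then show ?thesis unfolding prP_def by (rule pr_cong) simp
qed

lemma prP_and: assumes "prP n P" "prP n Q" shows "prP n (\<lambda>xs. P xs \<and> Q xs)"
proof -
  have "pr n (\<lambda>xs. if P xs then (\<lambda>xs. if Q xs then 1 else 0) xs else (\<lambda>_. 0) xs)"
    by (rule pr_ifP[OF assms(1) assms(2)[unfolded prP_def] pr_const])
  then show ?thesis unfolding prP_def by (rule pr_cong) simp
qed

lemma prP_or: assumes "prP n P" "prP n Q" shows "prP n (\<lambda>xs. P xs \<or> Q xs)"
  using prP_not[OF prP_and[OF prP_not[OF assms(1)] prP_not[OF assms(2)]]] by (rule prP_cong) simp

lemma prP_imp: assumes "prP n P" "prP n Q" shows "prP n (\<lambda>xs. P xs \<longrightarrow> Q xs)"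
  using prP_or[OF prP_not[OF assms(1)] assms(2)] by (rule prP_cong) simp

lemma prP_le: assumes "pr n f" "pr n g" shows "prP n (\<lambda>xs. f xs \<le> g xs)"
  using prP_zero[OF pr_sub[OF assms]] by (rule prP_cong) simp

lemma prP_eq: assumes "pr n f" "pr n g" shows "prP n (\<lambda>xs. f xs = g xs)"
  using prP_and[OF prP_le[OF assms] prP_le[OF assms(2,1)]] by (rule prP_cong) auto

lemma prP_lt: assumes "pr n f" "pr n g" shows "prP n (\<lambda>xs. f xs < g xs)"
  using prP_not[OF prP_le[OF assms(2,1)]] by (rule prP_cong) auto

lemma map_nth_drop: "k \<le> length zs \<Longrightarrow> map (\<lambda>i. zs ! i) [k..<length zs] = drop k zs"
  by (rule nth_equalityI) auto

lemma pr_shift: assumes "pr (Suc n) f" shows "pr (Suc (Suc n)) (\<lambda>zs. f (zs!0 # drop 2 zs))"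
proof -
  let ?gs = "map (\<lambda>i zs. zs!i) (0 # [2..<Suc (Suc n)])"
  have "pr (Suc (Suc n)) (\<lambda>zs. f (map (\<lambda>g. g zs) ?gs))"
  proof (rule pr_comp)
    have e: "length ?gs = Suc n" by (simp; arith)
    show "pr (length ?gs) f" unfolding e by (rule assms)
    show "\<forall>g\<in>set ?gs. pr (Suc (Suc n)) g" by (auto intro: pr_proj)
  qed
  then show ?thesis
  proof (rule pr_cong)
    fix zs :: "nat list" assume l: "length zs = Suc (Suc n)"
    have "map (\<lambda>g. g zs) ?gs = zs!0 # map (\<lambda>i. zs ! i) [2..<length zs]" using l by (simp del: upt_Suc)
    also have "\<dots> = zs!0 # drop 2 zs" using l map_nth_drop[of 2 zs] by (simp del: upt_Suc)
    finally show "f (map (\<lambda>g. g zs) ?gs) = f (zs!0 # drop 2 zs)" by simp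
  qed
qed

lemma rec_all: "rec_nat (Suc 0) (\<lambda>k y. if P k \<and> 0 < y then 1 else 0) m = (if \<forall>i<m. P i then Suc 0 else (0::nat))"
  by (induction m) (auto simp: less_Suc_eq)

lemma prP_all: assumes "prP (Suc n) P" "pr n c" shows "prP n (\<lambda>xs. \<forall>i<c xs. P (i#xs))"
proof -
  have s: "prP (Suc (Suc n)) (\<lambda>zs. P (zs!0 # drop 2 zs))"
    using pr_shift[OF assms(1)[unfolded prP_def]] unfolding prP_def .
  have y: "prP (Suc (Suc n)) (\<lambda>zs. zs!1 \<noteq> 0)"
    by (rule prP_not, rule prP_zero, rule pr_proj) simp
  have "pr n (\<lambda>xs. rec_nat 1 (\<lambda>k y. (\<lambda>zs. if P (zs!0 # drop 2 zs) \<and> zs!1 \<noteq> 0 then 1 else 0) (k#y#xs)) (c xs))"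
    by (rule pr_iter[where b="\<lambda>xs. 1" and c=c]) (use pr_const assms(2) prP_and[OF s y] in \<open>auto simp: prP_def\<close>)
  then show ?thesis unfolding prP_def
    by (rule pr_cong) (simp add: rec_all[where P="\<lambda>k. P (k # _)"])
qed

lemma prP_ex: assumes "prP (Suc n) P" "pr n c" shows "prP n (\<lambda>xs. \<exists>i<c xs. P (i#xs))"
  using prP_not[OF prP_all[OF prP_not[OF assms(1)] assms(2)]] by (rule prP_cong) auto



lemma rec_mod2: "rec_nat 0 (\<lambda>k y. if y = 0 then 1 else 0) m = (m::nat) mod 2"
  by (induction m) (auto, presburger+)

lemma pr_mod2: assumes "pr n f" shows "pr n (\<lambda>xs. f xs mod 2)"
proof -
  have "pr 1 (\<lambda>xs. rec_nat 0 (\<lambda>k y. (\<lambda>zs. if zs!1 = 0 then (\<lambda>_. 1) zs else (\<lambda>_. 0) zs) (k#y#xs)) (xs!0))"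
    by (rule pr_iter[where b="\<lambda>xs. 0" and c="\<lambda>xs. xs!0"])
       (rule pr_const | rule pr_proj; simp | rule pr_if; (rule pr_const | rule pr_proj; simp))+
  then have "pr 1 (\<lambda>ys. ys!0 mod 2)" by (rule pr_cong) (simp add: rec_mod2)
  from pr_comp1[OF this assms] show ?thesis by simp
qed

lemma rec_div2: "rec_nat 0 (\<lambda>k y. y + k mod 2) m = (m::nat) div 2"
  by (induction m) (auto, presburger)

lemma pr_div2: assumes "pr n f" shows "pr n (\<lambda>xs. f xs div 2)"
proof -
  have "pr 1 (\<lambda>xs. rec_nat 0 (\<lambda>k y. (\<lambda>zs. zs!1 + zs!0 mod 2) (k#y#xs)) (xs!0))"
    by (rule pr_iter[where b="\<lambda>xs. 0" and c="\<lambda>xs. xs!0"])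
       (rule pr_const | rule pr_proj; simp | rule pr_add; (rule pr_proj; simp | rule pr_mod2, rule pr_proj; simp))+
  then have "pr 1 (\<lambda>ys. ys!0 div 2)" by (rule pr_cong) (simp add: rec_div2)
  from pr_comp1[OF this assms] show ?thesis by simp
qed

definition tln :: "nat \<Rightarrow> nat" where "tln y = (y - 1) div 2"
definition dropn :: "nat \<Rightarrow> nat \<Rightarrow> nat" where "dropn k y = (tln ^^ k) y"

lemma rec_funpow: "rec_nat x (\<lambda>k y. F y) m = (F ^^ m) x" by (induction m) auto

lemma pr_tln: assumes "pr n f" shows "pr n (\<lambda>xs. tln (f xs))"
  unfolding tln_def by (rule pr_div2, rule pr_pred, rule assms)

lemma pr_dropn: assumes "pr n k" "pr n x" shows "pr n (\<lambda>xs. dropn (k xs) (x xs))"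
proof -
  have "pr n (\<lambda>xs. rec_nat (x xs) (\<lambda>k y. (\<lambda>zs. tln (zs!1)) (k#y#xs)) (k xs))"
    by (rule pr_iter[where b=x and c=k]) (rule assms | rule pr_tln, rule pr_proj; simp)+
  then show ?thesis unfolding dropn_def by (rule pr_cong) (simp add: rec_funpow)
qed

lemma rec_pow2: "rec_nat 1 (\<lambda>k y. y + y) m = (2::nat) ^ m" by (induction m) auto

lemma pr_pow2: assumes "pr n f" shows "pr n (\<lambda>xs. 2 ^ f xs)"
proof -
  have "pr 1 (\<lambda>xs. rec_nat 1 (\<lambda>k y. (\<lambda>zs. zs!1 + zs!1) (k#y#xs)) (xs!0))"
    by (rule pr_iter[where b="\<lambda>xs. 1" and c="\<lambda>xs. xs!0"])
       (rule pr_const | rule pr_proj; simp | rule pr_add; rule pr_proj; simp)+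
  then have "pr 1 (\<lambda>ys. 2 ^ (ys!0))" by (rule pr_cong) (simp add: rec_pow2[simplified])
  from pr_comp1[OF this assms] show ?thesis by simp
qed

definition lenn :: "nat \<Rightarrow> nat" where
  "lenn x = rec_nat 0 (\<lambda>i acc. acc + (if dropn i x = 0 then 0 else 1)) x"

lemma pr_lenn: assumes "pr n f" shows "pr n (\<lambda>xs. lenn (f xs))"
proof -
  have g: "pr 3 (\<lambda>zs. zs!1 + (if dropn (zs!0) (zs!2) = 0 then 0 else 1))"
    using pr_add[OF pr_proj[of 1 3] pr_if[OF pr_dropn[OF pr_proj[of 0 3] pr_proj[of 2 3]] pr_const[of 3 1] pr_const[of 3 0]]]
    by simp
  have "pr 1 (\<lambda>xs. rec_nat 0 (\<lambda>k y. (\<lambda>zs. zs!1 + (if dropn (zs!0) (zs!2) = 0 then 0 else 1)) (k#y#xs)) (xs!0))"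
    by (rule pr_iter[where b="\<lambda>xs. 0" and c="\<lambda>xs. xs!0" and g="\<lambda>zs. zs!1 + (if dropn (zs!0) (zs!2) = 0 then 0 else 1)"])
       (rule pr_const, insert g, simp add: numeral_3_eq_3, rule pr_proj, simp)
  then have "pr 1 (\<lambda>ys. lenn (ys!0))" unfolding lenn_def by (rule pr_cong) simp
  from pr_comp1[OF this assms] show ?thesis by simp
qed



lemma prP_comp2: "prP 2 P \<Longrightarrow> pr n f \<Longrightarrow> pr n g \<Longrightarrow> prP n (\<lambda>xs. P [f xs, g xs])"
  unfolding prP_def using pr_comp2[where f="\<lambda>xs. if P xs then 1 else 0"] by simp

definition pref :: "nat \<Rightarrow> nat \<Rightarrow> bool" where
  "pref u v \<longleftrightarrow> (\<forall>i<u. dropn i u \<noteq> 0 \<longrightarrow> (dropn i v \<noteq> 0 \<and> dropn i u mod 2 = dropn i v mod 2))"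

lemma pr_pref: "prP 2 (\<lambda>xs. pref (xs!0) (xs!1))"
proof -
  have P: "prP (Suc 2) (\<lambda>zs. dropn (zs!0) (zs!1) \<noteq> 0 \<longrightarrow> (dropn (zs!0) (zs!2) \<noteq> 0 \<and> dropn (zs!0) (zs!1) mod 2 = dropn (zs!0) (zs!2) mod 2))"
    using prP_imp[OF prP_not[OF prP_zero[OF pr_dropn[OF pr_proj[of 0 "Suc 2"] pr_proj[of 1 "Suc 2"]]]]
       prP_and[OF prP_not[OF prP_zero[OF pr_dropn[OF pr_proj[of 0 "Suc 2"] pr_proj[of 2 "Suc 2"]]]]
          prP_eq[OF pr_mod2[OF pr_dropn[OF pr_proj[of 0 "Suc 2"] pr_proj[of 1 "Suc 2"]]] pr_mod2[OF pr_dropn[OF pr_proj[of 0 "Suc 2"] pr_proj[of 2 "Suc 2"]]]]]]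
    by simp
  have "prP 2 (\<lambda>xs. \<forall>i<xs!0. (\<lambda>zs. dropn (zs!0) (zs!1) \<noteq> 0 \<longrightarrow> (dropn (zs!0) (zs!2) \<noteq> 0 \<and> dropn (zs!0) (zs!1) mod 2 = dropn (zs!0) (zs!2) mod 2)) (i#xs))"
    by (rule prP_all[OF P]) (rule pr_proj, simp)
  then show ?thesis unfolding pref_def by (rule prP_cong) (simp add: numeral_2_eq_2)
qed

definition subn :: "nat \<Rightarrow> nat \<Rightarrow> bool" where
  "subn u v \<longleftrightarrow> (\<exists>k<Suc v. pref u (dropn k v))"

lemma pr_subn: "prP 2 (\<lambda>xs. subn (xs!0) (xs!1))"
proof -
  have P: "prP (Suc 2) (\<lambda>zs. pref (zs!1) (dropn (zs!0) (zs!2)))"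
    using prP_comp2[OF pr_pref pr_proj[of 1 "Suc 2"] pr_dropn[OF pr_proj[of 0 "Suc 2"] pr_proj[of 2 "Suc 2"]]]
    by simp
  have "prP 2 (\<lambda>xs. \<exists>i<Suc (xs!1). (\<lambda>zs. pref (zs!1) (dropn (zs!0) (zs!2))) (i#xs))"
    by (rule prP_ex[OF P]) (rule pr_succ, rule pr_proj, simp)
  then show ?thesis unfolding subn_def by (rule prP_cong) (simp add: numeral_2_eq_2)
qed

definition Tf :: "nat \<Rightarrow> nat \<Rightarrow> nat \<Rightarrow> nat" where
  "Tf y a x = y + 2 ^ (lenn y) * (if subn (a div 2) x then 2 else 1)"

lemma pr_Tf: "pr 3 (\<lambda>xs. Tf (xs!0) (xs!1) (xs!2))"
  unfolding Tf_def
  using pr_add[OF pr_proj[of 0 3] pr_mult[OF pr_pow2[OF pr_lenn[OF pr_proj[of 0 3]]]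
      pr_ifP[OF prP_comp2[OF pr_subn pr_div2[OF pr_proj[of 1 3]] pr_proj[of 2 3]] pr_const[of 3 2] pr_const[of 3 1]]]]
  by simp



lemma enc_tl: "tln (enc h) = enc (tl h)"
  by (cases h) (auto simp: tln_def)

lemma dropn_enc: "dropn k (enc h) = enc (drop k h)"
proof (induction k arbitrary: h)
  case 0 then show ?case by (simp add: dropn_def)
next
  case (Suc k)
  have "dropn (Suc k) (enc h) = dropn k (tln (enc h))"
    by (simp only: dropn_def funpow_Suc_right o_apply)
  also have "\<dots> = enc (drop k (tl h))" using Suc by (simp add: enc_tl)
  finally show ?case by (simp add: drop_Suc)
qed

lemma enc_0: "enc h = 0 \<longleftrightarrow> h = []"
  by (cases h) auto

lemma enc_mod2: "h \<noteq> [] \<Longrightarrow> enc h mod 2 = (if hd h then 0 else 1)"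
  by (cases h) auto

lemma enc_even: "h \<noteq> [] \<Longrightarrow> even (enc h) \<longleftrightarrow> hd h"
  by (cases h) auto

lemma len_le: "length h \<le> enc h"
  by (induction h) auto

lemma lenn_enc: "lenn (enc h) = length h"
proof -
  have "rec_nat 0 (\<lambda>i acc. acc + (if dropn i (enc h) = 0 then 0 else 1)) m = min m (length h)" for m
    by (induction m) (auto simp: dropn_enc enc_0)
  then show ?thesis unfolding lenn_def using len_le[of h] by simp
qed

lemma prefix_nth_iff: "prefix q s \<longleftrightarrow> (\<forall>i<length q. i < length s \<and> q!i = s!i)"
proof
  assume "prefix q s" then obtain zs where "s = q @ zs" by (auto simp: prefix_def)
  then show "\<forall>i<length q. i < length s \<and> q!i = s!i" by (auto simp: nth_append)
next
  assume a: "\<forall>i<length q. i < length s \<and> q!i = s!i"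
  have l: "length q \<le> length s"
  proof (rule ccontr)
    assume "\<not> length q \<le> length s"
    then have "length s < length q" by simp
    with a show False by auto
  qed
  have "take (length q) s = q" by (rule nth_equalityI) (use a l in auto)
  then have "s = q @ drop (length q) s" by (metis append_take_drop_id)
  then show "prefix q s" unfolding prefix_def by blast
qed

lemma pref_enc: "pref (enc q) (enc s) \<longleftrightarrow> prefix q s"
proof -
  have "pref (enc q) (enc s) \<longleftrightarrow> (\<forall>i<enc q. i < length q \<longrightarrow> (i < length s \<and> q!i = s!i))"
    unfolding pref_def dropn_enc
    by (intro all_cong1 imp_cong refl) (auto simp: enc_0 enc_mod2 enc_even hd_drop_conv_nth split: if_splits)
  also have "\<dots> \<longleftrightarrow> (\<forall>i<length q. i < length s \<and> q!i = s!i)"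
    using len_le[of q] by auto
  finally show ?thesis using prefix_nth_iff by blast
qed

lemma sublist_drop_iff: "sublist q s \<longleftrightarrow> (\<exists>k\<le>length s. prefix q (drop k s))"
proof
  assume "sublist q s" then obtain ps ss where "s = ps @ q @ ss" by (auto simp: sublist_def)
  then show "\<exists>k\<le>length s. prefix q (drop k s)"
    by (intro exI[of _ "length ps"]) auto
next
  assume "\<exists>k\<le>length s. prefix q (drop k s)"
  then obtain k zs where "drop k s = q @ zs" by (auto simp: prefix_def)
  then have "s = take k s @ q @ zs" by (metis append_take_drop_id)
  then show "sublist q s" unfolding sublist_def by blast
qed

lemma subn_enc: "subn (enc q) (enc s) \<longleftrightarrow> sublist q s"
proof -
  have "subn (enc q) (enc s) \<longleftrightarrow> (\<exists>k<Suc (enc s). prefix q (drop k s))"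
    unfolding subn_def by (simp add: dropn_enc flip: pref_enc)
  also have "\<dots> \<longleftrightarrow> (\<exists>k\<le>length s. prefix q (drop k s))"
  proof
    assume "\<exists>k<Suc (enc s). prefix q (drop k s)"
    then obtain k where k: "k < Suc (enc s)" "prefix q (drop k s)" by blast
    show "\<exists>k\<le>length s. prefix q (drop k s)"
    proof (cases "k \<le> length s")
      case True then show ?thesis using k by blast
    next
      case False then have "drop k s = drop (length s) s" by simp
      then show ?thesis using k by (intro exI[of _ "length s"]) simp
    qed
  next
    assume "\<exists>k\<le>length s. prefix q (drop k s)"
    then show "\<exists>k<Suc (enc s). prefix q (drop k s)" using len_le[of s] by (meson le_imp_less_Suc order_trans)
  qed
  finally show ?thesis using sublist_drop_iff by blast
qed

lemma enc_snoc: "enc (h @ [b]) = enc h + 2 ^ length h * (if b then 2 else 1)"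
  by (induction h) auto

lemma Tf_enc: "Tf (enc h) (2 * enc q) (enc S) = enc (h @ [sublist q S])"
  unfolding Tf_def enc_snoc lenn_enc by (simp add: subn_enc)



theorem lemma3:
  fixes A :: algorithm and \<chi> :: "bool list \<Rightarrow> nat"
  assumes "is_algorithm A"
    and "computable_nat_on nonempty_strings \<chi>"
    and "\<forall>S \<in> nonempty_strings. reconstructs_with A S (\<chi> S)"
  shows "\<exists>C D. compressor_pair C D \<and> (\<forall>S \<in> nonempty_strings. length (C S) = \<chi> S)"
proof -
  obtain pA where pA: "\<And>h y. eval pA [enc h] y \<longleftrightarrow> (\<exists>a. A h = Some a \<and> y = enc_action a)"
    using assms(1) unfolding is_algorithm_def by blast
  obtain pX where pX: "\<And>s. s \<in> nonempty_strings \<Longrightarrow> eval pX [enc s] (\<chi> s)"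
    using assms(2) unfolding computable_nat_on_def by blast
  obtain pT where pT: "\<And>xs. length xs = 3 \<Longrightarrow> eval pT xs (Tf (xs!0) (xs!1) (xs!2))"
    using pr_Tf unfolding pr_def by blast
  obtain pD2 where pD2: "\<And>xs. length xs = 1 \<Longrightarrow> eval pD2 xs (xs!0 div 2)"
    using pr_div2[OF pr_proj[of 0 1]] unfolding pr_def by auto
  define good where "good S h \<longleftrightarrow> length h = \<chi> S
        \<and> (\<forall>i < \<chi> S. \<exists>q. A (take i h) = Some (Query q) \<and> h ! i = substring_answer S q)
        \<and> A h = Some (Output S)" for S h
  define C where "C S = (SOME h. good S h)" for S
  define D where "D h = (case A h of Some (Output s) \<Rightarrow> s | _ \<Rightarrow> [])" for h
  have goodC: "good S (C S)" if "S \<in> nonempty_strings" for S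
  proof -
    have "\<exists>h. good S h" using assms(3) that unfolding reconstructs_with_def good_def by blast
    then show ?thesis unfolding C_def by (rule someI_ex)
  qed
  have DC: "D (C S) = S" if "S \<in> nonempty_strings" for S
    using goodC[OF that] unfolding good_def D_def by simp
  have pos: "\<chi> S \<noteq> 0" if "S \<in> nonempty_strings" for S
  proof
    assume z: "\<chi> S = 0"
    have h0: "A [] = Some (Output S)" using goodC[OF that] z unfolding good_def by auto
    define S' where "S' = (if S = [True] then [False] else [True])"
    have S': "S' \<in> nonempty_strings" "S' \<noteq> S" unfolding S'_def nonempty_strings_def by auto
    show False
    proof (cases "\<chi> S' = 0")
      case True
      then have "A [] = Some (Output S')" using goodC[OF S'(1)] unfolding good_def by auto
      then show False using h0 S'(2) by simp
    next
      case False
      then obtain q where "A (take 0 (C S')) = Some (Query q)"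
        using goodC[OF S'(1)] unfolding good_def by blast
      then show False using h0 by simp
    qed
  qed
  define G where "G = Comp pT [Proj 1, Comp pA [Proj 1], Proj 2]"
  define P where "P = Prim Zero G"
  have evP: "eval P [i, enc S] (enc (take i (C S)))" if "S \<in> nonempty_strings" "i \<le> \<chi> S" for S i
    using that(2)
  proof (induction i)
    case 0
    then show ?case unfolding P_def by (auto intro: eval.prim0 eval.zero)
  next
    case (Suc i)
    let ?h = "C S"
    have g: "good S ?h" by (rule goodC[OF that(1)])
    from Suc.prems g obtain q where q: "A (take i ?h) = Some (Query q)" "?h ! i = substring_answer S q"
      unfolding good_def by (metis Suc_le_lessD)
    have len: "i < length ?h" using g Suc.prems unfolding good_def by simp
    have IH: "eval P [i, enc S] (enc (take i ?h))" using Suc by simp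
    have a: "eval pA [enc (take i ?h)] (2 * enc q)" using pA q(1) by simp
    let ?ys = "[enc (take i ?h), 2 * enc q, enc S]"
    have eG: "eval G [i, enc (take i ?h), enc S] (Tf (enc (take i ?h)) (2 * enc q) (enc S))"
      unfolding G_def
    proof (rule eval.comp[where ys="?ys"])
      show "length ?ys = length [Proj 1, Comp pA [Proj 1], Proj 2]" by simp
      show "\<forall>j<length [Proj 1, Comp pA [Proj 1], Proj 2]. eval ([Proj 1, Comp pA [Proj 1], Proj 2] ! j) [i, enc (take i ?h), enc S] (?ys ! j)"
      proof (intro allI impI)
        fix j assume "j < length [Proj 1, Comp pA [Proj 1], Proj 2]"
        then have "j = 0 \<or> j = 1 \<or> j = 2" by auto
        moreover have "eval (Proj 1) [i, enc (take i ?h), enc S] (enc (take i ?h))"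
          using eval.proj[of 1 "[i, enc (take i ?h), enc S]"] by simp
        moreover have "eval (Proj 2) [i, enc (take i ?h), enc S] (enc S)"
          using eval.proj[of 2 "[i, enc (take i ?h), enc S]"] by simp
        moreover have "eval (Comp pA [Proj 1]) [i, enc (take i ?h), enc S] (2 * enc q)"
          by (rule eval.comp[where ys="[enc (take i ?h)]"]) (use a \<open>eval (Proj 1) [i, enc (take i ?h), enc S] (enc (take i ?h))\<close> in auto)
        ultimately show "eval ([Proj 1, Comp pA [Proj 1], Proj 2] ! j) [i, enc (take i ?h), enc S] (?ys ! j)"
          by auto
      qed
      show "eval pT ?ys (Tf (enc (take i ?h)) (2 * enc q) (enc S))"
        using pT[of ?ys] by simp
    qed
    have "Tf (enc (take i ?h)) (2 * enc q) (enc S) = enc (take (Suc i) ?h)"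
      using Tf_enc q(2) len by (simp add: take_Suc_conv_app_nth substring_answer_def)
    with eG have "eval G [i, enc (take i ?h), enc S] (enc (take (Suc i) ?h))" by simp
    then show ?case using IH unfolding P_def by (auto intro: eval.primS)
  qed
  define pC where "pC = Comp P [pX, Proj 0]"
  have evC: "eval pC [enc S] (enc (C S))" if "S \<in> nonempty_strings" for S
    unfolding pC_def
  proof (rule eval.comp[where ys="[\<chi> S, enc S]"])
    show "\<forall>j<length [pX, Proj 0]. eval ([pX, Proj 0] ! j) [enc S] ([\<chi> S, enc S] ! j)"
      using pX[OF that] eval.proj[of 0 "[enc S]"] by (auto simp: less_Suc_eq)
    show "eval P [\<chi> S, enc S] (enc (C S))"
      using evP[OF that order_refl] goodC[OF that] unfolding good_def by simp
  qed simp
  define pDD where "pDD = Comp pD2 [pA]"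
  have evD: "eval pDD [enc (C S)] (enc (D (C S)))" if "S \<in> nonempty_strings" for S
    unfolding pDD_def
  proof (rule eval.comp[where ys="[2 * enc S + 1]"])
    have "A (C S) = Some (Output S)" using goodC[OF that] unfolding good_def by simp
    then show "\<forall>j<length [pA]. eval ([pA] ! j) [enc (C S)] ([2 * enc S + 1] ! j)"
      using pA by auto
    show "eval pD2 [2 * enc S + 1] (enc (D (C S)))"
      using pD2[of "[2 * enc S + 1]"] DC[OF that] by simp
  qed simp
  have "compressor_pair C D"
    unfolding compressor_pair_def
  proof (intro conjI)
    show "\<forall>S\<in>nonempty_strings. C S \<in> nonempty_strings"
      using goodC pos unfolding good_def nonempty_strings_def by fastforce
    show "inj_on C nonempty_strings" by (metis DC inj_onI)
    show "computable_on nonempty_strings C" unfolding computable_on_def using evC by blast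
    show "\<forall>S\<in>nonempty_strings. D (C S) = S" using DC by blast
    show "computable_on (C ` nonempty_strings) D" unfolding computable_on_def using evD by blast
  qed
  moreover have "\<forall>S \<in> nonempty_strings. length (C S) = \<chi> S"
    using goodC unfolding good_def by blast
  ultimately show ?thesis by blast
qed


end
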